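(* Let $f:\mathbb{R}^2_+\to\mathbb{R}$ be continuous, with $f(0,0)>0$, and assume there exists $R>0$ such that $f(x,y)<0$ whenever $x^2+y^2>R^2$. Then the zero set $Z=\{\mathbf z\in\mathbb{R}^2_+ : f(\mathbf z)=0\}$ has a compact connected subset $S$ which intersects both sets $\{(0,y) : r\le y\le R\}$ and $\{(x,0) : r\le x\le R\}$ for some $r\in(0,R)$.
   Context: $\mathbb{R}^2_+$ denotes the closed positive quadrant $\{(x,y):x\ge0,\,y\ge0\}$. *)

theory Defs
  imports "HOL-Analysis.Analysis"
begin

end

theory Submission
  imports Defs
begin

theorem lemma2p2:
  fixes f :: "real \<times> real \<Rightarrow> real" and R :: real
  assumes cont: "continuous_on {z. fst z \<ge> 0 \<and> snd z \<ge> 0} f"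
    and pos: "f (0, 0) > 0"
    and R: "R > 0"
    and neg: "\<And>x y. x \<ge> 0 \<Longrightarrow> y \<ge> 0 \<Longrightarrow> x\<^sup>2 + y\<^sup>2 > R\<^sup>2 \<Longrightarrow> f (x, y) < 0"
  shows "\<exists>S r. S \<subseteq> {z. fst z \<ge> 0 \<and> snd z \<ge> 0 \<and> f z = 0} \<and> compact S \<and> connected S
           \<and> 0 < r \<and> r < R
           \<and> S \<inter> {(0, y) | y. r \<le> y \<and> y \<le> R} \<noteq> {}
           \<and> S \<inter> {(x, 0) | x. r \<le> x \<and> x \<le> R} \<noteq> {}"
proof -
  define h where "h = (\<lambda>z::real\<times>real. (\<bar>fst z\<bar>, \<bar>snd z\<bar>))"
  define g where "g = f \<circ> h"
  have hc: "continuous_on UNIV h" unfolding h_def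
    by (intro continuous_intros)
  have gc: "continuous_on UNIV g" unfolding g_def
    apply (rule continuous_on_compose[OF hc])
    apply (rule continuous_on_subset[OF cont]) by (auto simp: h_def)
  have gneg: "g z < 0" if "(fst z)\<^sup>2 + (snd z)\<^sup>2 > R\<^sup>2" for z
    using that neg[of "\<bar>fst z\<bar>" "\<bar>snd z\<bar>"] by (simp add: g_def h_def)
  have g0: "g 0 > 0" using pos by (simp add: g_def h_def zero_prod_def)
  define P where "P = {z. g z > 0}"
  have oP: "open P" unfolding P_def using gc by (simp add: open_Collect_less)
  define U where "U = connected_component_set P 0"
  have oU: "open U" unfolding U_def using oP open_connected_component by blast
  have cU: "connected U" unfolding U_def by simp
  have UP: "U \<subseteq> P" unfolding U_def by (rule connected_component_subset)
  have clP: "closure P \<subseteq> {z. g z \<ge> 0}"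
    unfolding P_def
    apply (rule closure_minimal)
    using gc by (auto simp: closed_Collect_le)
  have frP: "frontier P \<subseteq> {z. g z = 0}"
    using clP oP unfolding frontier_def P_def by (auto simp: interior_open)
  have frU: "frontier U \<subseteq> {z. g z = 0}"
    using frP frontier_of_connected_component_subset[of P 0] U_def by blast
  define a where "a = ((0::real), R+1)"
  define b where "b = (R+1, (0::real))"
  define c where "c = (R+1, R+1)"
  have far: "g z < 0" if "z \<in> closed_segment a c \<union> closed_segment c b" for z
  proof -
    from that obtain u where u: "0 \<le> u" "u \<le> 1" and
      "z = (1-u) *\<^sub>R a + u *\<^sub>R c \<or> z = (1-u) *\<^sub>R c + u *\<^sub>R b"
      unfolding closed_segment_def by auto
    then have "(fst z = u*(R+1) \<and> snd z = R+1) \<or> (fst z = R+1 \<and> snd z = (1-u)*(R+1))"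
      by (auto simp: a_def b_def c_def algebra_simps)
    then have "(fst z)\<^sup>2 + (snd z)\<^sup>2 > R\<^sup>2"
    proof
      assume "fst z = u*(R+1) \<and> snd z = R+1"
      moreover have "(R+1)^2 > R^2" using R by (simp add: power2_eq_square algebra_simps)
      ultimately show ?thesis by (smt (verit) zero_le_power2)
    next
      assume "fst z = R+1 \<and> snd z = (1-u)*(R+1)"
      moreover have "(R+1)^2 > R^2" using R by (simp add: power2_eq_square algebra_simps)
      ultimately show ?thesis by (smt (verit) zero_le_power2)
    qed
    then show ?thesis by (rule gneg)
  qed
  define T where "T = closed_segment a c \<union> closed_segment c b"
  have cT: "connected T" unfolding T_def
    by (rule connected_Un) auto
  have TU: "T \<subseteq> - U" using far UP unfolding T_def P_def by fastforce
  define C where "C = connected_component_set (- U) a"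
  have aT: "a \<in> T" "b \<in> T" unfolding T_def by auto
  have TC: "T \<subseteq> C" unfolding C_def
    using cT TU aT connected_component_maximal by blast
  have Ccomp: "C \<in> components (- U)" unfolding C_def components_def
    using TU aT by auto
  have CU: "C \<subseteq> - U" unfolding C_def by (rule connected_component_subset)
  define S0 where "S0 = frontier C"
  have cS0: "connected S0" unfolding S0_def
    by (rule connected_frontier_component_complement[OF cU Ccomp])
  have S0U: "S0 \<subseteq> frontier U"
    using frontier_of_components_subset[OF Ccomp] unfolding S0_def
    by (simp add: frontier_complement)
  have S0g: "S0 \<subseteq> {z. g z = 0}" using S0U frU by blast
  have S0b: "S0 \<subseteq> cball 0 R"
  proof
    fix z assume "z \<in> S0"
    then have "g z = 0" using S0g by blast
    then have "\<not> (fst z)\<^sup>2 + (snd z)\<^sup>2 > R\<^sup>2" using gneg by fastforce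
    then have "(fst z)\<^sup>2 + (snd z)\<^sup>2 \<le> R\<^sup>2" by simp
    then have "sqrt ((fst z)\<^sup>2 + (snd z)\<^sup>2) \<le> R" using R
      by (metis abs_of_pos real_sqrt_abs real_sqrt_le_mono)
    then show "z \<in> cball 0 R"
      by (simp add: dist_norm norm_prod_def)
  qed
  have kS0: "compact S0" unfolding S0_def
    using S0b S0_def bounded_cball bounded_subset compact_eq_bounded_closed by blast
  define S where "S = h ` S0"
  have kS: "compact S" unfolding S_def
    by (rule compact_continuous_image[OF continuous_on_subset[OF hc] kS0]) simp
  have cS: "connected S" unfolding S_def
    by (rule connected_continuous_image[OF continuous_on_subset[OF hc] cS0]) simp
  have Sz: "S \<subseteq> {z. fst z \<ge> 0 \<and> snd z \<ge> 0 \<and> f z = 0}"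
    using S0g unfolding S_def g_def h_def by auto
  have U0: "0 \<in> U" unfolding U_def P_def using g0 by simp
  have "closed_segment 0 a \<inter> frontier C \<noteq> {}"
    apply (rule connected_Int_frontier)
    using TC aT U0 CU by auto
  then obtain t where t: "(0, t) \<in> S0" "0 \<le> t"
    unfolding S0_def closed_segment_def a_def using R by (auto simp: zero_prod_def) (meson R less_eq_real_def mult_nonneg_nonneg add_pos_pos zero_less_one)
  have "closed_segment 0 b \<inter> frontier C \<noteq> {}"
    apply (rule connected_Int_frontier)
    using TC aT U0 CU by auto
  then obtain s where s: "(s, 0) \<in> S0" "0 \<le> s"
    unfolding S0_def closed_segment_def b_def using R by (auto simp: zero_prod_def) (meson R less_eq_real_def mult_nonneg_nonneg add_pos_pos zero_less_one)
  have t0: "t \<noteq> 0" using t S0g g0 by (auto simp: zero_prod_def)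
  have s0: "s \<noteq> 0" using s S0g g0 by (auto simp: zero_prod_def)
  have tR: "t \<le> R"
  proof (rule ccontr)
    assume "\<not> t \<le> R"
    then have "0^2 + t^2 > R^2" using R by (simp add: power_strict_mono)
    then show False using gneg[of "(0,t)"] t S0g by auto
  qed
  have sR: "s \<le> R"
  proof (rule ccontr)
    assume "\<not> s \<le> R"
    then have "s^2 + 0^2 > R^2" using R by (simp add: power_strict_mono)
    then show False using gneg[of "(s,0)"] s S0g by auto
  qed
  define r where "r = min s t / 2"
  have "(0, t) \<in> S" unfolding S_def h_def using t by force
  moreover have "(s, 0) \<in> S" unfolding S_def h_def using s by force
  ultimately show ?thesis
    using Sz kS cS t0 s0 t s tR sR R
    apply (intro exI[of _ S] exI[of _ r])
    unfolding r_def by auto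
qed

end
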